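(* Assume the Jacobi parameters of $\rho$ satisfy $0<\inf_n a_n\le\sup_n a_n<\infty$, and let $x_0\in\mathbb{R}$. Then the following three conditions are equivalent: (a) $\rho$ satisfies the Nevai condition at $x_0$; (b) $\int (x-x_0)^2\,d\eta_n^{(x_0)}(x)\to0$ as $n\to\infty$; (c) $\displaystyle \lim_{n\to\infty}\frac{p_n(x_0)^2}{\sum_{j=0}^n p_j(x_0)^2}=0$.
   Context: Let $\rho$ be a probability measure on $\mathbb{R}$ with compact but infinite support, $p_n$ ($n\ge0$) its orthonormal polynomials (real coefficients, positive leading coefficient, $p_0=1$), and $\{a_n,b_n\}_{n\ge1}$ ($a_n>0$, $b_n\in\mathbb{R}$) its Jacobi parameters, defined by $xp_n(x)=a_{n+1}p_{n+1}(x)+b_{n+1}p_n(x)+a_np_{n-1}(x)$ with $p_{-1}=0$. Set $K_n(x,y)=\sum_{j=0}^n p_j(x)p_j(y)$. For $x_0\in\mathbb{R}$ let $\eta_n^{(x_0)}$ be the probability measure $d\eta_n^{(x_0)}(x)=K_n(x,x_0)^2\,d\rho(x)/K_n(x_0,x_0)$. We say $\rho$ satisfies the Nevai condition at $x_0$ if $\eta_n^{(x_0)}\to\delta_{x_0}$ weakly as $n\to\infty$. *)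

theory Defs
  imports "HOL-Probability.Probability" "HOL-Computational_Algebra.Polynomial"
begin

definition msupport :: "real measure \<Rightarrow> real set" where
  "msupport \<rho> = {x. \<forall>e>0. measure \<rho> (ball x e) > 0}"

definition admissible_measure :: "real measure \<Rightarrow> bool" where
  "admissible_measure \<rho> \<longleftrightarrow> prob_space \<rho> \<and> sets \<rho> = sets borel \<and>
     compact (msupport \<rho>) \<and> infinite (msupport \<rho>)"

definition orthonormal_polys :: "real measure \<Rightarrow> (nat \<Rightarrow> real poly) \<Rightarrow> bool" where
  "orthonormal_polys \<rho> p \<longleftrightarrow>
     (\<forall>n. degree (p n) = n \<and> lead_coeff (p n) > 0) \<and>
     (\<forall>m n. (\<lambda>x. poly (p m) x * poly (p n) x) \<in> borel_measurable \<rho> \<and>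
            integrable \<rho> (\<lambda>x. poly (p m) x * poly (p n) x) \<and>
            integral\<^sup>L \<rho> (\<lambda>x. poly (p m) x * poly (p n) x) = (if m = n then 1 else 0))"

text \<open>a, b are the Jacobi parameters (indexed from 1) of p:
  x p_n = a_{n+1} p_{n+1} + b_{n+1} p_n + a_n p_{n-1}, p_{-1} = 0, a_n > 0.\<close>
definition jacobi_params :: "(nat \<Rightarrow> real poly) \<Rightarrow> (nat \<Rightarrow> real) \<Rightarrow> (nat \<Rightarrow> real) \<Rightarrow> bool" where
  "jacobi_params p a b \<longleftrightarrow> (\<forall>n\<ge>1. a n > 0) \<and>
     (\<forall>n x. x * poly (p n) x = a (n+1) * poly (p (n+1)) x + b (n+1) * poly (p n) x
              + (if n = 0 then 0 else a n * poly (p (n-1)) x))"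

definition CD_kernel :: "(nat \<Rightarrow> real poly) \<Rightarrow> nat \<Rightarrow> real \<Rightarrow> real \<Rightarrow> real" where
  "CD_kernel p n x y = (\<Sum>j\<le>n. poly (p j) x * poly (p j) y)"

definition eta :: "real measure \<Rightarrow> (nat \<Rightarrow> real poly) \<Rightarrow> real \<Rightarrow> nat \<Rightarrow> real measure" where
  "eta \<rho> p x0 n = density \<rho> (\<lambda>x. ennreal ((CD_kernel p n x x0)\<^sup>2 / CD_kernel p n x0 x0))"

definition weak_conv_to :: "(nat \<Rightarrow> real measure) \<Rightarrow> real measure \<Rightarrow> bool" where
  "weak_conv_to \<mu> \<nu> \<longleftrightarrow> (\<forall>f :: real \<Rightarrow> real. continuous_on UNIV f \<and> bounded (range f) \<longrightarrow>
       (\<lambda>n. integral\<^sup>L (\<mu> n) f) \<longlonglongrightarrow> integral\<^sup>L \<nu> f)"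

definition nevai_condition :: "real measure \<Rightarrow> (nat \<Rightarrow> real poly) \<Rightarrow> real \<Rightarrow> bool" where
  "nevai_condition \<rho> p x0 \<longleftrightarrow> weak_conv_to (eta \<rho> p x0) (return borel x0)"

end

theory Submission imports Defs begin


lemma jrec:
  assumes "jacobi_params p a b"
  shows "x * poly (p n) x = a (n+1) * poly (p (n+1)) x + b (n+1) * poly (p n) x
              + (if n = 0 then 0 else a n * poly (p (n-1)) x)"
  using assms unfolding jacobi_params_def by blast

lemma CD_formula:
  assumes "jacobi_params p a b"
  shows "(x - y) * CD_kernel p n x y =
    a (n+1) * (poly (p (n+1)) x * poly (p n) y - poly (p n) x * poly (p (n+1)) y)"
proof (induction n)
  case 0
  have rx: "x * poly (p 0) x = a 1 * poly (p 1) x + b 1 * poly (p 0) x"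
    using jrec[OF assms, of x 0] by simp
  have ry: "y * poly (p 0) y = a 1 * poly (p 1) y + b 1 * poly (p 0) y"
    using jrec[OF assms, of y 0] by simp
  have "(x - y) * CD_kernel p 0 x y = (x * poly (p 0) x) * poly (p 0) y - (y * poly (p 0) y) * poly (p 0) x"
    by (simp add: CD_kernel_def algebra_simps)
  also have "\<dots> = a 1 * (poly (p 1) x * poly (p 0) y - poly (p 0) x * poly (p 1) y)"
    unfolding rx ry by (simp add: algebra_simps)
  finally show ?case by simp
next
  case (Suc n)
  have rx: "x * poly (p (Suc n)) x = a (Suc n+1) * poly (p (Suc n+1)) x + b (Suc n+1) * poly (p (Suc n)) x + a (Suc n) * poly (p n) x"
    using jrec[OF assms, of x "Suc n"] by simp
  have ry: "y * poly (p (Suc n)) y = a (Suc n+1) * poly (p (Suc n+1)) y + b (Suc n+1) * poly (p (Suc n)) y + a (Suc n) * poly (p n) y"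
    using jrec[OF assms, of y "Suc n"] by simp
  have "(x - y) * CD_kernel p (Suc n) x y = (x - y) * CD_kernel p n x y + (x * poly (p (Suc n)) x) * poly (p (Suc n)) y - (y * poly (p (Suc n)) y) * poly (p (Suc n)) x"
    by (simp add: CD_kernel_def algebra_simps)
  also have "\<dots> = a (Suc n+1) * (poly (p (Suc n+1)) x * poly (p (Suc n)) y - poly (p (Suc n)) x * poly (p (Suc n+1)) y)"
    unfolding rx ry Suc by (simp add: algebra_simps)
  finally show ?case by simp
qed



lemma ON_int:
  assumes "orthonormal_polys \<rho> p"
  shows "integrable \<rho> (\<lambda>x. poly (p i) x * poly (p j) x)"
    "integral\<^sup>L \<rho> (\<lambda>x. poly (p i) x * poly (p j) x) = (if i = j then 1 else 0)"
  using assms unfolding orthonormal_polys_def by blast+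

lemma K2_int:
  assumes "orthonormal_polys \<rho> p"
  shows "integrable \<rho> (\<lambda>x. (CD_kernel p n x x0)\<^sup>2)"
    "integral\<^sup>L \<rho> (\<lambda>x. (CD_kernel p n x x0)\<^sup>2) = CD_kernel p n x0 x0"
proof -
  have eq: "(\<lambda>x. (CD_kernel p n x x0)\<^sup>2) = (\<lambda>x. \<Sum>i\<le>n. \<Sum>j\<le>n.
      (poly (p i) x0 * poly (p j) x0) * (poly (p i) x * poly (p j) x))"
    by (simp add: CD_kernel_def power2_eq_square sum_product mult_ac)
  show "integrable \<rho> (\<lambda>x. (CD_kernel p n x x0)\<^sup>2)"
    unfolding eq by (simp add: ON_int(1)[OF assms])
  have "integral\<^sup>L \<rho> (\<lambda>x. (CD_kernel p n x x0)\<^sup>2) = (\<Sum>i\<le>n. \<Sum>j\<le>n.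
      (poly (p i) x0 * poly (p j) x0) * (if i = j then 1 else 0))"
    unfolding eq
  proof (subst Bochner_Integration.integral_sum)
    fix i assume "i \<in> {..n}"
    show "integrable \<rho> (\<lambda>x. \<Sum>j\<le>n. (poly (p i) x0 * poly (p j) x0) * (poly (p i) x * poly (p j) x))"
      by (simp add: ON_int(1)[OF assms])
  next
    show "(\<Sum>i\<le>n. integral\<^sup>L \<rho> (\<lambda>x. \<Sum>j\<le>n. (poly (p i) x0 * poly (p j) x0) * (poly (p i) x * poly (p j) x))) =
       (\<Sum>i\<le>n. \<Sum>j\<le>n. (poly (p i) x0 * poly (p j) x0) * (if i = j then 1 else 0))"
    proof (rule sum.cong[OF refl])
      fix i assume "i \<in> {..n}"
      show "integral\<^sup>L \<rho> (\<lambda>x. \<Sum>j\<le>n. (poly (p i) x0 * poly (p j) x0) * (poly (p i) x * poly (p j) x)) =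
        (\<Sum>j\<le>n. (poly (p i) x0 * poly (p j) x0) * (if i = j then 1 else 0))"
        by (subst Bochner_Integration.integral_sum) (simp_all add: ON_int[OF assms] del: integral_sum')
    qed
  qed
  also have "\<dots> = CD_kernel p n x0 x0"
    by (simp add: CD_kernel_def if_distrib sum.delta cong: if_cong)
  finally show "integral\<^sup>L \<rho> (\<lambda>x. (CD_kernel p n x x0)\<^sup>2) = CD_kernel p n x0 x0" .
qed

lemma M2_int:
  assumes "orthonormal_polys \<rho> p" "jacobi_params p a b"
  shows "integrable \<rho> (\<lambda>x. (x - x0)\<^sup>2 * (CD_kernel p n x x0)\<^sup>2)"
    "integral\<^sup>L \<rho> (\<lambda>x. (x - x0)\<^sup>2 * (CD_kernel p n x x0)\<^sup>2)
       = (a (n+1))\<^sup>2 * ((poly (p n) x0)\<^sup>2 + (poly (p (n+1)) x0)\<^sup>2)"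
proof -
  define u where "u = poly (p n) x0"
  define v where "v = poly (p (n+1)) x0"
  define A where "A = a (n+1)"
  have eq: "(\<lambda>x. (x - x0)\<^sup>2 * (CD_kernel p n x x0)\<^sup>2) = (\<lambda>x.
      (A\<^sup>2 * u\<^sup>2) * (poly (p (n+1)) x * poly (p (n+1)) x)
     - (2 * A\<^sup>2 * u * v) * (poly (p (n+1)) x * poly (p n) x)
     + (A\<^sup>2 * v\<^sup>2) * (poly (p n) x * poly (p n) x))"
  proof
    fix x
    have "(x - x0)\<^sup>2 * (CD_kernel p n x x0)\<^sup>2 = ((x - x0) * CD_kernel p n x x0)\<^sup>2"
      by (simp add: power_mult_distrib)
    also have "\<dots> = (A * (poly (p (n+1)) x * u - poly (p n) x * v))\<^sup>2"
      unfolding CD_formula[OF assms(2)] A_def u_def v_def by simp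
    also have "\<dots> = (A\<^sup>2 * u\<^sup>2) * (poly (p (n+1)) x * poly (p (n+1)) x)
     - (2 * A\<^sup>2 * u * v) * (poly (p (n+1)) x * poly (p n) x)
     + (A\<^sup>2 * v\<^sup>2) * (poly (p n) x * poly (p n) x)"
      by (simp add: power2_eq_square algebra_simps)
    finally show "(x - x0)\<^sup>2 * (CD_kernel p n x x0)\<^sup>2 = \<dots>" .
  qed
  show "integrable \<rho> (\<lambda>x. (x - x0)\<^sup>2 * (CD_kernel p n x x0)\<^sup>2)"
    unfolding eq by (simp add: ON_int(1)[OF assms(1)])
  show "integral\<^sup>L \<rho> (\<lambda>x. (x - x0)\<^sup>2 * (CD_kernel p n x x0)\<^sup>2)
       = (a (n+1))\<^sup>2 * ((poly (p n) x0)\<^sup>2 + (poly (p (n+1)) x0)\<^sup>2)"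
    unfolding eq
    apply (subst Bochner_Integration.integral_add)
      apply (simp add: ON_int(1)[OF assms(1)])
     apply (simp add: ON_int(1)[OF assms(1)])
    apply (subst Bochner_Integration.integral_diff)
      apply (simp add: ON_int(1)[OF assms(1)])
     apply (simp add: ON_int(1)[OF assms(1)])
    apply (simp only: integral_mult_right_zero ON_int(2)[OF assms(1)])
    apply (simp add: A_def u_def v_def algebra_simps)
    done
qed



lemma bc_seq:
  fixes A v :: "nat \<Rightarrow> real" and cc D :: real
  assumes vnn: "\<And>n. 0 \<le> v n" and v0: "0 < v 0" and cc: "0 < cc"
    and Alo: "\<And>n. cc \<le> A n" and Ahi: "\<And>n. A n \<le> D"
  shows "(\<lambda>n. A n * (v n + v (Suc n)) / (\<Sum>j\<le>n. v j)) \<longlonglongrightarrow> 0 \<longleftrightarrow>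
         (\<lambda>n. v n / (\<Sum>j\<le>n. v j)) \<longlonglongrightarrow> 0"
proof -
  define S where "S n = (\<Sum>j\<le>n. v j)" for n
  have Spos: "0 < S n" for n
  proof -
    have "v 0 \<le> S n" unfolding S_def by (rule member_le_sum) (auto simp: vnn)
    thus ?thesis using v0 by linarith
  qed
  have SSuc: "S (Suc n) = S n + v (Suc n)" for n unfolding S_def by simp
  have mnn: "0 \<le> A n * (v n + v (Suc n)) / S n" for n
    using Spos[of n] Alo[of n] cc vnn[of n] vnn[of "Suc n"] by simp
  have rnn: "0 \<le> v n / S n" for n using Spos[of n] vnn[of n] by simp
  show ?thesis unfolding S_def[symmetric]
  proof
    assume m: "(\<lambda>n. A n * (v n + v (Suc n)) / S n) \<longlonglongrightarrow> 0"
    have le: "v n / S n \<le> A n * (v n + v (Suc n)) / S n / cc" for n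
    proof -
      have "cc * v n \<le> A n * (v n + v (Suc n))"
        by (rule mult_mono) (use Alo[of n] vnn[of n] vnn[of "Suc n"] cc in auto)
      hence "v n \<le> A n * (v n + v (Suc n)) / cc" using cc by (simp add: field_simps)
      hence "v n / S n \<le> (A n * (v n + v (Suc n)) / cc) / S n"
        using Spos[of n] by (intro divide_right_mono) auto
      thus ?thesis by (simp add: divide_divide_eq_left mult.commute)
    qed
    have "(\<lambda>n. A n * (v n + v (Suc n)) / S n / cc) \<longlonglongrightarrow> 0 / cc"
      by (intro tendsto_divide m) (use cc in auto)
    hence h: "(\<lambda>n. A n * (v n + v (Suc n)) / S n / cc) \<longlonglongrightarrow> 0" by simp
    show "(\<lambda>n. v n / S n) \<longlonglongrightarrow> 0"
      by (rule tendsto_sandwich[OF _ _ tendsto_const h]) (use rnn le in \<open>auto intro!: always_eventually\<close>)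
  next
    assume r: "(\<lambda>n. v n / S n) \<longlonglongrightarrow> 0"
    have r': "(\<lambda>n. v (Suc n) / S (Suc n)) \<longlonglongrightarrow> 0" using LIMSEQ_Suc[OF r] by simp
    have ev: "eventually (\<lambda>n. v (Suc n) / S (Suc n) < 1/2) sequentially"
      using order_tendstoD(2)[OF r', of "1/2"] by linarith
    have le: "A n * (v n + v (Suc n)) / S n \<le> D * (v n / S n + 2 * (v (Suc n) / S (Suc n)))"
      if h: "v (Suc n) / S (Suc n) < 1/2" for n
    proof -
      have Sp: "0 < S n" "0 < S (Suc n)" using Spos by auto
      have "v (Suc n) < S (Suc n) / 2" using h Sp by (simp add: field_simps)
      hence lt: "v (Suc n) < S n" unfolding SSuc by simp
      have "v (Suc n) / S n \<le> 2 * (v (Suc n) / S (Suc n))"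
        using lt Sp vnn[of "Suc n"] mult_right_mono[of "v (Suc n)" "S n" "v (Suc n)"] unfolding SSuc by (simp add: field_simps)
      hence "(v n + v (Suc n)) / S n \<le> v n / S n + 2 * (v (Suc n) / S (Suc n))"
        by (simp add: add_divide_distrib)
      moreover have "A n * ((v n + v (Suc n)) / S n) \<le> D * ((v n + v (Suc n)) / S n)"
        by (rule mult_right_mono[OF Ahi]) (use Sp vnn[of n] vnn[of "Suc n"] in simp)
      moreover have "0 \<le> D" using Ahi[of n] Alo[of n] cc by linarith
      ultimately show ?thesis
        by (smt (verit, best) mult_left_mono times_divide_eq_right)
    qed
    have h: "(\<lambda>n. D * (v n / S n + 2 * (v (Suc n) / S (Suc n)))) \<longlonglongrightarrow> D * (0 + 2 * 0)"
      by (intro tendsto_intros r r')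
    show "(\<lambda>n. A n * (v n + v (Suc n)) / S n) \<longlonglongrightarrow> 0"
      apply (rule tendsto_sandwich[OF _ _ tendsto_const])
        apply (simp add: mnn)
       apply (rule eventually_mono[OF ev le], assumption)
      using h by simp
  qed
qed



lemma support_AE:
  assumes adm: "admissible_measure \<rho>"
  shows "AE x in \<rho>. x \<in> msupport \<rho>"
proof -
  have ps: "prob_space \<rho>" and se: "sets \<rho> = sets borel"
    using adm unfolding admissible_measure_def by auto
  interpret prob_space \<rho> by (rule ps)
  define B where "B q = (if 0 < snd q \<and> measure \<rho> (ball (real_of_rat (fst q)) (real_of_rat (snd q))) = 0
      then ball (real_of_rat (fst q)) (real_of_rat (snd q)) else {})" for q :: "rat \<times> rat"
  have Bnull: "B q \<in> null_sets \<rho>" for q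
  proof (cases "0 < snd q \<and> measure \<rho> (ball (real_of_rat (fst q)) (real_of_rat (snd q))) = 0")
    case True
    have "ball (real_of_rat (fst q)) (real_of_rat (snd q)) \<in> sets \<rho>" using se by simp
    then show ?thesis using True unfolding B_def by (simp add: null_sets_def emeasure_eq_measure)
  next
    case False
    then show ?thesis unfolding B_def by (simp only: if_False) simp
  qed
  have N: "(\<Union>q. B q) \<in> null_sets \<rho>" using Bnull by blast
  have cov: "{x \<in> space \<rho>. \<not> x \<in> msupport \<rho>} \<subseteq> (\<Union>q. B q)"
  proof
    fix x assume "x \<in> {x \<in> space \<rho>. \<not> x \<in> msupport \<rho>}"
    then obtain e where e: "e > 0" "\<not> measure \<rho> (ball x e) > 0"
      unfolding msupport_def by auto
    have m0: "measure \<rho> (ball x e) = 0" using e(2) measure_nonneg[of \<rho> "ball x e"] by linarith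
    obtain q where q: "q \<in> \<rat>" "x < q" "q < x + e/3" using Rats_dense_in_real[of x "x + e/3"] e by auto
    obtain r where r: "r \<in> \<rat>" "e/3 < r" "r < 2*e/3" using Rats_dense_in_real[of "e/3" "2*e/3"] e by auto
    obtain q' where q': "q = real_of_rat q'" using q(1) Rats_cases by blast
    obtain r' where r': "r = real_of_rat r'" using r(1) Rats_cases by blast
    have sub: "ball q r \<subseteq> ball x e"
    proof
      fix y assume "y \<in> ball q r"
      then have "dist q y < r" by simp
      then show "y \<in> ball x e" using q r by (simp add: dist_real_def)
    qed
    have "measure \<rho> (ball q r) \<le> measure \<rho> (ball x e)"
      by (rule finite_measure_mono[OF sub]) (use se in simp)
    hence mq: "measure \<rho> (ball q r) = 0" using m0 measure_nonneg[of \<rho> "ball q r"] by linarith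
    have "0 < real_of_rat r'" using r(2) r' e(1) by linarith
    hence rpos: "0 < r'" by simp
    have "x \<in> B (q', r')" unfolding B_def using mq rpos q r q' r' e
      by (simp add: dist_real_def)
    thus "x \<in> (\<Union>q. B q)" by blast
  qed
  show ?thesis by (rule AE_I'[OF N cov])
qed



theorem theorem2p2:
  fixes \<rho> :: "real measure" and p :: "nat \<Rightarrow> real poly" and a b :: "nat \<Rightarrow> real" and x0 :: real
  assumes "admissible_measure \<rho>"
    and "orthonormal_polys \<rho> p"
    and "jacobi_params p a b"
    and "\<exists>c>0. \<forall>n\<ge>1. c \<le> a n"
    and "\<exists>C. \<forall>n\<ge>1. a n \<le> C"
  shows "(nevai_condition \<rho> p x0 \<longleftrightarrow>
            (\<lambda>n. integral\<^sup>L (eta \<rho> p x0 n) (\<lambda>x. (x - x0)\<^sup>2)) \<longlonglongrightarrow> 0) \<and>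
         ((\<lambda>n. integral\<^sup>L (eta \<rho> p x0 n) (\<lambda>x. (x - x0)\<^sup>2)) \<longlonglongrightarrow> 0 \<longleftrightarrow>
            (\<lambda>n. (poly (p n) x0)\<^sup>2 / (\<Sum>j\<le>n. (poly (p j) x0)\<^sup>2)) \<longlonglongrightarrow> 0)"
proof -
  note adm = assms(1) and ON = assms(2) and JP = assms(3)
  have ps: "prob_space \<rho>" and se: "sets \<rho> = sets borel" and cS: "compact (msupport \<rho>)"
    using adm unfolding admissible_measure_def by auto
  interpret prob_space \<rho> by (rule ps)
  obtain c where c: "c > 0" "\<And>n. n \<ge> 1 \<Longrightarrow> c \<le> a n" using assms(4) by auto
  obtain C where C: "\<And>n. n \<ge> 1 \<Longrightarrow> a n \<le> C" using assms(5) by auto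
  have bme: "borel_measurable \<rho> = (borel_measurable borel :: (real \<Rightarrow> real) set)"
    by (rule measurable_cong_sets[OF se refl])
  have meas: "f \<in> borel_measurable \<rho>" if "continuous_on UNIV f" for f :: "real \<Rightarrow> real"
    unfolding bme by (rule borel_measurable_continuous_onI[OF that])
  define K where "K n = CD_kernel p n x0 x0" for n
  have Ksum: "K n = (\<Sum>j\<le>n. (poly (p j) x0)\<^sup>2)" for n
    unfolding K_def CD_kernel_def by (simp add: power2_eq_square)
  have p00: "0 < poly (p 0) x0"
  proof -
    have "\<forall>n. degree (p n) = n \<and> lead_coeff (p n) > 0"
      using ON unfolding orthonormal_polys_def by blast
    hence d: "degree (p 0) = 0" and l: "lead_coeff (p 0) > 0" by blast+
    obtain c0 where "p 0 = [:c0:]" using degree0_coeffs[OF d] by auto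
    thus ?thesis using l by simp
  qed
  have Kpos: "0 < K n" for n
  proof -
    have "(poly (p 0) x0)\<^sup>2 \<le> K n" unfolding Ksum by (rule member_le_sum) auto
    moreover have "0 < (poly (p 0) x0)\<^sup>2" using p00 by simp
    ultimately show ?thesis by linarith
  qed
  define w where "w n x = (CD_kernel p n x x0)\<^sup>2 / K n" for n x
  have wnn: "0 \<le> w n x" for n x unfolding w_def using Kpos[of n] by simp
  have wmeas: "w n \<in> borel_measurable \<rho>" for n
    unfolding w_def[abs_def] CD_kernel_def by (intro meas continuous_intros) (use Kpos[of n] in auto)
  have eta_eq: "eta \<rho> p x0 n = density \<rho> (\<lambda>x. ennreal (w n x))" for n
    unfolding eta_def w_def K_def ..
  have eta_int: "integral\<^sup>L (eta \<rho> p x0 n) f = integral\<^sup>L \<rho> (\<lambda>x. w n x * f x)"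
    if "f \<in> borel_measurable \<rho>" for n f
    unfolding eta_eq by (subst integral_density) (use that wmeas wnn in auto)
  have w_int: "integrable \<rho> (w n)" "integral\<^sup>L \<rho> (w n) = 1" for n
  proof -
    show "integrable \<rho> (w n)" unfolding w_def[abs_def] by (simp add: K2_int(1)[OF ON])
    show "integral\<^sup>L \<rho> (w n) = 1" unfolding w_def[abs_def]
      using K2_int(2)[OF ON, of n x0] Kpos[of n] by (simp add: K_def)
  qed
  define mom where "mom n = integral\<^sup>L (eta \<rho> p x0 n) (\<lambda>x. (x - x0)\<^sup>2)" for n
  have wm_eq: "(\<lambda>x. w n x * (x - x0)\<^sup>2) = (\<lambda>x. (x - x0)\<^sup>2 * (CD_kernel p n x x0)\<^sup>2 / K n)" for n
    unfolding w_def by (simp add: field_simps)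
  have wm_int: "integrable \<rho> (\<lambda>x. w n x * (x - x0)\<^sup>2)" for n
    unfolding wm_eq by (simp add: M2_int(1)[OF ON JP])
  have mom_eq: "mom n = integral\<^sup>L \<rho> (\<lambda>x. w n x * (x - x0)\<^sup>2)" for n
    unfolding mom_def by (rule eta_int) (intro meas continuous_intros)
  have mom_formula: "mom n = (a (Suc n))\<^sup>2 * ((poly (p n) x0)\<^sup>2 + (poly (p (Suc n)) x0)\<^sup>2) / K n" for n
    unfolding mom_eq wm_eq using M2_int(2)[OF ON JP, of x0 n] by simp
  have part2: "mom \<longlonglongrightarrow> 0 \<longleftrightarrow> (\<lambda>n. (poly (p n) x0)\<^sup>2 / (\<Sum>j\<le>n. (poly (p j) x0)\<^sup>2)) \<longlonglongrightarrow> 0"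
  proof -
    have "mom = (\<lambda>n. (a (Suc n))\<^sup>2 * ((poly (p n) x0)\<^sup>2 + (poly (p (Suc n)) x0)\<^sup>2) / (\<Sum>j\<le>n. (poly (p j) x0)\<^sup>2))"
      using mom_formula Ksum by auto
    moreover have "(\<lambda>n. (a (Suc n))\<^sup>2 * ((poly (p n) x0)\<^sup>2 + (poly (p (Suc n)) x0)\<^sup>2) / (\<Sum>j\<le>n. (poly (p j) x0)\<^sup>2)) \<longlonglongrightarrow> 0
        \<longleftrightarrow> (\<lambda>n. (poly (p n) x0)\<^sup>2 / (\<Sum>j\<le>n. (poly (p j) x0)\<^sup>2)) \<longlonglongrightarrow> 0"
    proof (rule bc_seq[where cc = "c\<^sup>2" and D = "C\<^sup>2"])
      show "0 \<le> (poly (p n) x0)\<^sup>2" for n by simp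
      show "0 < (poly (p 0) x0)\<^sup>2" using p00 by simp
      show "0 < c\<^sup>2" using c by simp
      show "c\<^sup>2 \<le> (a (Suc n))\<^sup>2" for n using c(1) c(2)[of "Suc n"] by (intro power_mono) auto
      show "(a (Suc n))\<^sup>2 \<le> C\<^sup>2" for n using c(1) c(2)[of "Suc n"] C[of "Suc n"] by (intro power_mono) auto
    qed
    ultimately show ?thesis by simp
  qed
  have ret: "integral\<^sup>L (return borel x0) f = f x0" if "f \<in> borel_measurable borel" for f :: "real \<Rightarrow> real"
    by (rule integral_return) (use that in auto)
  have part1: "nevai_condition \<rho> p x0 \<longleftrightarrow> mom \<longlonglongrightarrow> 0"
  proof
    assume nev: "nevai_condition \<rho> p x0"
    obtain B where B: "\<And>x. x \<in> msupport \<rho> \<Longrightarrow> norm x \<le> B"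
      using compact_imp_bounded[OF cS] unfolding bounded_iff by auto
    define R where "R = (B + \<bar>x0\<bar>)\<^sup>2"
    have R0: "0 \<le> R" unfolding R_def by simp
    define g where "g x = min ((x - x0)\<^sup>2) R" for x
    have gcont: "continuous_on UNIV g" unfolding g_def[abs_def] by (intro continuous_intros)
    have gbd: "bounded (range g)" unfolding bounded_iff
    proof (intro exI ballI)
      fix y assume "y \<in> range g"
      then obtain x where "y = g x" by auto
      thus "norm y \<le> R" unfolding g_def using R0 by simp
    qed
    have lim: "(\<lambda>n. integral\<^sup>L (eta \<rho> p x0 n) g) \<longlonglongrightarrow> integral\<^sup>L (return borel x0) g"
      using nev gcont gbd unfolding nevai_condition_def weak_conv_to_def by blast
    have g0: "integral\<^sup>L (return borel x0) g = 0"
      using ret[OF borel_measurable_continuous_onI[OF gcont]] R0 by (simp add: g_def)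
    have geq: "integral\<^sup>L (eta \<rho> p x0 n) g = mom n" for n
    proof -
      have "integral\<^sup>L (eta \<rho> p x0 n) g = integral\<^sup>L \<rho> (\<lambda>x. w n x * g x)"
        by (rule eta_int[OF meas[OF gcont]])
      also have "\<dots> = integral\<^sup>L \<rho> (\<lambda>x. w n x * (x - x0)\<^sup>2)"
      proof (rule integral_cong_AE)
        show "(\<lambda>x. w n x * g x) \<in> borel_measurable \<rho>"
          using wmeas[of n] meas[OF gcont] by simp
        show "(\<lambda>x. w n x * (x - x0)\<^sup>2) \<in> borel_measurable \<rho>"
          using wmeas[of n] meas[of "\<lambda>x. (x - x0)\<^sup>2"] by (simp add: continuous_intros)
        show "AE x in \<rho>. w n x * g x = w n x * (x - x0)\<^sup>2"
          using support_AE[OF adm]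
        proof (rule eventually_mono)
          fix x assume "x \<in> msupport \<rho>"
          hence "\<bar>x\<bar> \<le> B" using B by simp
          hence "\<bar>x - x0\<bar> \<le> B + \<bar>x0\<bar>" by linarith
          hence "\<bar>x - x0\<bar>\<^sup>2 \<le> (B + \<bar>x0\<bar>)\<^sup>2" by (intro power_mono) auto
          hence "(x - x0)\<^sup>2 \<le> R" unfolding R_def by simp
          thus "w n x * g x = w n x * (x - x0)\<^sup>2" unfolding g_def by simp
        qed
      qed
      also have "\<dots> = mom n" by (rule mom_eq[symmetric])
      finally show ?thesis .
    qed
    show "mom \<longlonglongrightarrow> 0" using lim unfolding g0 geq .
  next
    assume m: "mom \<longlonglongrightarrow> 0"
    show "nevai_condition \<rho> p x0" unfolding nevai_condition_def weak_conv_to_def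
    proof (intro allI impI)
      fix f :: "real \<Rightarrow> real" assume "continuous_on UNIV f \<and> bounded (range f)"
      hence fc: "continuous_on UNIV f" and fb: "bounded (range f)" by auto
      have fmeas: "f \<in> borel_measurable \<rho>" by (rule meas[OF fc])
      obtain M where M: "\<And>x. \<bar>f x\<bar> \<le> M" using fb unfolding bounded_iff by auto
      have M0: "0 \<le> M" using M[of x0] by linarith
      have ic: "isCont f x0" using fc continuous_on_eq_continuous_at[OF open_UNIV] by blast
      show "(\<lambda>n. integral\<^sup>L (eta \<rho> p x0 n) f) \<longlonglongrightarrow> integral\<^sup>L (return borel x0) f"
        unfolding ret[OF borel_measurable_continuous_onI[OF fc]] lim_sequentially
      proof (intro allI impI)
        fix \<epsilon> :: real assume ep: "0 < \<epsilon>"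
        obtain \<delta> where dpos: "\<delta> > 0" and hd0: "\<And>x. x \<noteq> x0 \<and> norm (x - x0) < \<delta> \<Longrightarrow> norm (f x - f x0) < \<epsilon>/2"
          using ic[unfolded isCont_def LIM_eq] ep by (meson half_gt_zero)
        have hd: "\<bar>f x - f x0\<bar> < \<epsilon>/2" if "\<bar>x - x0\<bar> < \<delta>" for x
          using hd0[of x] that ep by (cases "x = x0") auto
        define Bc where "Bc = 2 * M / \<delta>\<^sup>2"
        have Bc0: "0 \<le> Bc" unfolding Bc_def using M0 by simp
        have pw: "\<bar>f x - f x0\<bar> \<le> \<epsilon>/2 + Bc * (x - x0)\<^sup>2" for x
        proof (cases "\<bar>x - x0\<bar> < \<delta>")
          case True
          thus ?thesis using hd[OF True] Bc0 by (smt (verit) zero_le_power2 mult_nonneg_nonneg)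
        next
          case False
          hence "\<delta>\<^sup>2 \<le> \<bar>x - x0\<bar>\<^sup>2" using dpos by (intro power_mono) auto
          hence "\<delta>\<^sup>2 \<le> (x - x0)\<^sup>2" by simp
          hence "Bc * \<delta>\<^sup>2 \<le> Bc * (x - x0)\<^sup>2" using Bc0 by (rule mult_left_mono)
          moreover have "Bc * \<delta>\<^sup>2 = 2 * M" unfolding Bc_def using dpos by simp
          moreover have "\<bar>f x - f x0\<bar> \<le> 2 * M" using M[of x] M[of x0] by linarith
          ultimately show ?thesis using ep by linarith
        qed
        have "(\<lambda>n. Bc * mom n) \<longlonglongrightarrow> Bc * 0" by (intro tendsto_intros m)
        then obtain N where N: "\<And>n. n \<ge> N \<Longrightarrow> dist (Bc * mom n) 0 < \<epsilon>/2"
          unfolding lim_sequentially using ep by (metis half_gt_zero mult_zero_right)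
        show "\<exists>no. \<forall>n\<ge>no. dist (integral\<^sup>L (eta \<rho> p x0 n) f) (f x0) < \<epsilon>"
        proof (intro exI allI impI)
          fix n assume nN: "N \<le> n"
          have int_wf: "integrable \<rho> (\<lambda>x. w n x * f x)"
          proof (rule Bochner_Integration.integrable_bound[where f = "\<lambda>x. M * w n x"])
            show "integrable \<rho> (\<lambda>x. M * w n x)" using w_int(1)[of n] by simp
            show "(\<lambda>x. w n x * f x) \<in> borel_measurable \<rho>" using wmeas[of n] fmeas by simp
            show "AE x in \<rho>. norm (w n x * f x) \<le> norm (M * w n x)"
            proof (rule AE_I2)
              fix x
              have "\<bar>w n x\<bar> * \<bar>f x\<bar> \<le> \<bar>w n x\<bar> * M" using M[of x] by (intro mult_left_mono) auto
              thus "norm (w n x * f x) \<le> norm (M * w n x)" using M0 wnn[of n x]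
                by (simp add: abs_mult mult.commute)
            qed
          qed
          have int_w0: "integrable \<rho> (\<lambda>x. f x0 * w n x)" using w_int(1)[of n] by simp
          have int_d: "integrable \<rho> (\<lambda>x. w n x * (f x - f x0))"
          proof -
            have "integrable \<rho> (\<lambda>x. w n x * f x - f x0 * w n x)"
              using int_wf int_w0 by (rule Bochner_Integration.integrable_diff)
            thus ?thesis by (simp add: algebra_simps)
          qed
          have eqd: "integral\<^sup>L (eta \<rho> p x0 n) f - f x0 = integral\<^sup>L \<rho> (\<lambda>x. w n x * (f x - f x0))"
          proof -
            have "integral\<^sup>L \<rho> (\<lambda>x. w n x * (f x - f x0)) = integral\<^sup>L \<rho> (\<lambda>x. w n x * f x - f x0 * w n x)"
              by (simp add: algebra_simps)
            also have "\<dots> = integral\<^sup>L \<rho> (\<lambda>x. w n x * f x) - integral\<^sup>L \<rho> (\<lambda>x. f x0 * w n x)"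
              by (rule Bochner_Integration.integral_diff[OF int_wf int_w0])
            also have "\<dots> = integral\<^sup>L (eta \<rho> p x0 n) f - f x0"
              using w_int(2)[of n] eta_int[OF fmeas, of n] by simp
            finally show ?thesis by simp
          qed
          have int_b: "integrable \<rho> (\<lambda>x. \<epsilon>/2 * w n x + Bc * (w n x * (x - x0)\<^sup>2))"
            using w_int(1)[of n] wm_int[of n] by simp
          have "\<bar>integral\<^sup>L \<rho> (\<lambda>x. w n x * (f x - f x0))\<bar> \<le> integral\<^sup>L \<rho> (\<lambda>x. \<epsilon>/2 * w n x + Bc * (w n x * (x - x0)\<^sup>2))"
          proof (rule integral_abs_bound_integral[OF int_d int_b])
            fix x
            have "w n x * \<bar>f x - f x0\<bar> \<le> w n x * (\<epsilon>/2 + Bc * (x - x0)\<^sup>2)"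
              using pw[of x] wnn[of n x] by (rule mult_left_mono)
            moreover have "\<bar>w n x * (f x - f x0)\<bar> = w n x * \<bar>f x - f x0\<bar>"
              using wnn[of n x] by (simp add: abs_mult)
            ultimately show "\<bar>w n x * (f x - f x0)\<bar> \<le> \<epsilon>/2 * w n x + Bc * (w n x * (x - x0)\<^sup>2)"
              by (simp add: algebra_simps)
          qed
          also have "\<dots> = \<epsilon>/2 * integral\<^sup>L \<rho> (w n) + Bc * mom n"
            by (subst Bochner_Integration.integral_add) (use w_int(1)[of n] wm_int[of n] mom_eq[of n] in simp_all)
          also have "\<dots> < \<epsilon>" using N[OF nN] w_int(2)[of n] by simp
          finally show "dist (integral\<^sup>L (eta \<rho> p x0 n) f) (f x0) < \<epsilon>"
            unfolding dist_real_def eqd .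
        qed
      qed
    qed
  qed
  show ?thesis using part1 part2 unfolding mom_def[abs_def] by simp
qed

end
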